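(* With $S_\rho$ the globally defined, Lipschitz (in $u$), $p$-periodic cut-off time-dependent semiflow of the lemma above, set $\Phi_t:=S_\rho(t+p,t;\cdot):X\to X$ for $t\in\mathbb{R}$, and for $\gamma>0$ define $G_t(\gamma)=\{u\in X:$ there is a negative semiorbit $\{u_m\}_{m\le0}$ of $\Phi_t$ (i.e. $\Phi_t(u_m)=u_{m+1}$ for $m\le -1$) with $u_0=u$ and $\limsup_{m\to-\infty}\frac{1}{|m|}\ln\|u_m\|\le-\ln\gamma\}$. Then $S_\rho(t,s;G_s(\gamma))=G_t(\gamma)$ for all $t\ge s$.
   Context: $X=C([-\tau,0];\mathbb{R}^n)$ with sup norm. $S_\rho$ is the time-dependent semiflow defined by the cut-off integral equation $S_\rho(t,s;u)=T_0(t-s)u+\iota^{-1}\int_s^t T_0^{\odot*}(t-r)[B(r)S_\rho(r,s;u)+R_{\rho,r}(r,S_\rho(r,s;u))]dr$ (notation as in the periodicity lemma: shift semigroup $T_0$, sun-star extension, embedding $\iota u=(u(0),u)$, linear part $B(t)=D_2F(t,0)$ and cut-off nonlinearity $R_{\rho,r}$ of a $p$-periodic $C^k$ delay equation with $f(t,0)=0$), with $\rho>0$ small enough that $S_\rho$ is defined on $\{t\ge s\}\times X$, $S_\rho(t,s;\cdot)$ is Lipschitz on $X$, and $S_\rho(t+p,s+p;\cdot)=S_\rho(t,s;\cdot)$. The semiflow property $S_\rho(t,r;S_\rho(r,s;u))=S_\rho(t,s;u)$ for $s\le r\le t$ holds. It is moreover assumed (as holds for the invariant manifolds produced by the Lipschitz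 invariant manifold theorem for $\Phi_t$) that $G_{t}(\gamma)=G_{t-jp}(\gamma)$ for $j\in\mathbb{N}$, which follows from $\Phi_{t-jp}=\Phi_t$. *)

theory Defs
  imports "HOL-Analysis.Analysis"
begin

text \<open>Phase space X = C([-tau,0]; R^n), represented as functions real => real^n that are
  continuous on [-tau,0] and (normalised to be) zero outside [-tau,0].\<close>
definition Xc :: "real \<Rightarrow> (real \<Rightarrow> real^'n) set" where
  "Xc \<tau> = {\<phi>. continuous_on {-\<tau>..0} \<phi> \<and> (\<forall>x. x \<notin> {-\<tau>..0} \<longrightarrow> \<phi> x = 0)}"

definition supn :: "real \<Rightarrow> (real \<Rightarrow> real^'n) \<Rightarrow> real" where
  "supn \<tau> \<phi> = (SUP x\<in>{-\<tau>..0}. norm (\<phi> x))"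

definition Phi :: "(real \<Rightarrow> real \<Rightarrow> 'x \<Rightarrow> 'x) \<Rightarrow> real \<Rightarrow> real \<Rightarrow> 'x \<Rightarrow> 'x" where
  "Phi S p t = (\<lambda>u. S (t + p) t u)"

definition neg_semiorbit :: "('x \<Rightarrow> 'x) \<Rightarrow> (int \<Rightarrow> 'x) \<Rightarrow> bool" where
  "neg_semiorbit F us \<longleftrightarrow> (\<forall>m::int. m \<le> -1 \<longrightarrow> F (us m) = us (m + 1))"

definition lnE :: "real \<Rightarrow> ereal" where
  "lnE x = (if x = 0 then -\<infinity> else ereal (ln x))"

text \<open>G_t(gamma): points with a negative semiorbit of Phi_t satisfying
  limsup_{m -> -inf} (1/|m|) ln ||u_m|| <= - ln gamma (written with k = -m -> +inf).\<close>
definition Gset :: "(real \<Rightarrow> real \<Rightarrow> (real \<Rightarrow> real^'n) \<Rightarrow> (real \<Rightarrow> real^'n))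
    \<Rightarrow> real \<Rightarrow> real \<Rightarrow> real \<Rightarrow> real \<Rightarrow> (real \<Rightarrow> real^'n) set" where
  "Gset S p \<tau> t \<gamma> = {u \<in> Xc \<tau>. \<exists>us :: int \<Rightarrow> (real \<Rightarrow> real^'n).
      (\<forall>m\<le>0. us m \<in> Xc \<tau>) \<and> neg_semiorbit (Phi S p t) us \<and> us 0 = u \<and>
      limsup (\<lambda>k::nat. lnE (supn \<tau> (us (- int k))) / ereal (real k)) \<le> ereal (- ln \<gamma>)}"

end

theory Submission imports Defs begin

definition Rg :: "real \<Rightarrow> (nat \<Rightarrow> real) \<Rightarrow> bool" where
  "Rg c N \<longleftrightarrow> (\<forall>e>0. eventually (\<lambda>k. N k < exp ((c + e) * real k)) sequentially)"

lemma lnE_div_lt: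
  assumes "x \<ge> 0" "k \<ge> 1"
  shows "lnE x / ereal (real k) < ereal r \<longleftrightarrow> x < exp (r * real k)"
proof (cases "x = 0")
  case True then show ?thesis using assms by (simp add: lnE_def)
next
  case False
  then have xp: "x > 0" using assms by simp
  have kp: "real k > 0" using assms by simp
  have "lnE x / ereal (real k) = ereal (ln x / real k)" using False kp by (simp add: lnE_def)
  moreover have "ln x / real k < r \<longleftrightarrow> ln x < r * real k" using kp by (simp add: divide_less_eq)
  moreover have "ln x < r * real k \<longleftrightarrow> x < exp (r * real k)" using xp
    by (metis exp_less_cancel_iff exp_ln)
  ultimately show ?thesis by simp
qed

lemma lnE_div_fin:
  assumes "k \<ge> 1"
  shows "lnE x / ereal (real k) < \<infinity>"
  using assms by (simp add: lnE_def)

lemma limsup_char: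
  assumes nn: "\<And>k. N k \<ge> 0"
  shows "limsup (\<lambda>k. lnE (N k) / ereal (real k)) \<le> ereal c \<longleftrightarrow> Rg c N"
proof
  assume L: "limsup (\<lambda>k. lnE (N k) / ereal (real k)) \<le> ereal c"
  show "Rg c N" unfolding Rg_def
  proof (intro allI impI)
    fix e :: real assume e: "e > 0"
    have "eventually (\<lambda>k. lnE (N k) / ereal (real k) < ereal (c + e)) sequentially"
      using L e unfolding Limsup_le_iff by auto
    moreover have "eventually (\<lambda>k. k \<ge> (1::nat)) sequentially" by (rule eventually_ge_at_top)
    ultimately show "eventually (\<lambda>k. N k < exp ((c + e) * real k)) sequentially"
      by eventually_elim (use lnE_div_lt nn in blast)
  qed
next
  assume R: "Rg c N"
  show "limsup (\<lambda>k. lnE (N k) / ereal (real k)) \<le> ereal c"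
    unfolding Limsup_le_iff
  proof (intro allI impI)
    fix y assume y: "y > ereal c"
    have ev1: "eventually (\<lambda>k. k \<ge> (1::nat)) sequentially" by (rule eventually_ge_at_top)
    show "eventually (\<lambda>k. y > lnE (N k) / ereal (real k)) sequentially"
    proof (cases y)
      case (real r)
      then have "r - c > 0" using y by simp
      then have "eventually (\<lambda>k. N k < exp ((c + (r - c)) * real k)) sequentially"
        using R unfolding Rg_def by blast
      with ev1 show ?thesis
        by eventually_elim (use lnE_div_lt nn real in auto)
    next
      case PInf
      show ?thesis using ev1 unfolding PInf by eventually_elim (use lnE_div_fin in auto)
    next
      case MInf with y show ?thesis by simp
    qed
  qed
qed

lemma supn_nonneg:
  assumes "u \<in> Xc \<tau>" "\<tau> \<ge> 0"
  shows "0 \<le> supn \<tau> u"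
proof -
  have c: "continuous_on {-\<tau>..0} (\<lambda>x. norm (u x))"
    using assms(1) unfolding Xc_def by (auto intro: continuous_intros)
  have "compact ((\<lambda>x. norm (u x)) ` {-\<tau>..0})"
    by (rule compact_continuous_image[OF c]) simp
  then have b: "bdd_above ((\<lambda>x. norm (u x)) ` {-\<tau>..0})"
    by (meson bounded_imp_bdd_above compact_imp_bounded)
  have "norm (u 0) \<le> supn \<tau> u" unfolding supn_def
    by (rule cSUP_upper[OF _ b]) (use assms in simp)
  then show ?thesis using norm_ge_zero order_trans by blast
qed

lemma ev_real_ge: "eventually (\<lambda>k::nat. a \<le> real k) sequentially"
proof -
  have "eventually (\<lambda>k::nat. nat \<lceil>a\<rceil> \<le> k) sequentially" by (rule eventually_ge_at_top)
  then show ?thesis by eventually_elim linarith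
qed

lemma Rg_transfer:
  assumes R: "Rg c N" and C: "C \<ge> 1" and b: "\<And>k. N' k \<le> C * N (k + j)"
  shows "Rg c N'"
  unfolding Rg_def
proof (intro allI impI)
  fix e :: real assume e: "e > 0"
  have "eventually (\<lambda>k. N k < exp ((c + e/2) * real k)) sequentially"
    using R e unfolding Rg_def by simp
  then have E1: "eventually (\<lambda>k. N (k + j) < exp ((c + e/2) * real (k + j))) sequentially"
    by (subst eventually_sequentially_seg) 
  define A where "A = ln C + (c + e/2) * real j"
  have E2: "eventually (\<lambda>k::nat. A * 2 / e \<le> real k) sequentially" by (rule ev_real_ge)
  show "eventually (\<lambda>k. N' k < exp ((c + e) * real k)) sequentially"
    using E1 E2
  proof eventually_elim
    case (elim k)
    have Cp: "C > 0" using C by simp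
    have "A \<le> e / 2 * real k" using elim(2) e by (simp add: field_simps)
    moreover have "(c + e/2) * real (k + j) = c*real k + e/2*real k + (c+e/2)*real j"
      by (simp add: algebra_simps)
    moreover have "(c + e) * real k = c * real k + e/2 * real k + e/2 * real k" by (simp add: algebra_simps)
    ultimately have "ln C + (c + e/2) * real (k + j) \<le> (c + e) * real k"
      unfolding A_def by linarith
    then have "exp (ln C + (c + e/2) * real (k + j)) \<le> exp ((c + e) * real k)" by simp
    then have "C * exp ((c + e/2) * real (k + j)) \<le> exp ((c + e) * real k)"
      using Cp by (simp add: exp_add)
    moreover have "C * N (k + j) < C * exp ((c + e/2) * real (k + j))"
      using elim(1) Cp by simp
    ultimately show ?case using b[of k] by linarith
  qed
qed


theorem mainTheorem3:
  fixes S :: "real \<Rightarrow> real \<Rightarrow> (real \<Rightarrow> real^'n) \<Rightarrow> (real \<Rightarrow> real^'n)"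
    and \<tau> p \<gamma> :: real
  assumes tau_pos: "\<tau> > 0" and p_pos: "p > 0" and gamma_pos: "\<gamma> > 0"
    and maps: "\<And>t s u. s \<le> t \<Longrightarrow> u \<in> Xc \<tau> \<Longrightarrow> S t s u \<in> Xc \<tau>"
    and lipschitz: "\<And>t s. s \<le> t \<Longrightarrow> \<exists>L. \<forall>u\<in>Xc \<tau>. \<forall>v\<in>Xc \<tau>.
                       supn \<tau> (\<lambda>x. S t s u x - S t s v x) \<le> L * supn \<tau> (\<lambda>x. u x - v x)"
    and initial: "\<And>s u. u \<in> Xc \<tau> \<Longrightarrow> S s s u = u"
    and zero: "\<And>t s. s \<le> t \<Longrightarrow> S t s (\<lambda>x. 0) = (\<lambda>x. 0)"
    and periodic: "\<And>t s u. s \<le> t \<Longrightarrow> u \<in> Xc \<tau> \<Longrightarrow> S (t + p) (s + p) u = S t s u"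
    and semiflow: "\<And>t r s u. s \<le> r \<Longrightarrow> r \<le> t \<Longrightarrow> u \<in> Xc \<tau> \<Longrightarrow>
                       S t r (S r s u) = S t s u"
    and st: "s \<le> t"
  shows "S t s ` Gset S p \<tau> s \<gamma> = Gset S p \<tau> t \<gamma>"
proof -
  define c where "c = - ln \<gamma>"
  have zX: "(\<lambda>x. 0 :: real^'n) \<in> Xc \<tau>" unfolding Xc_def by simp
  have bound: "\<exists>C\<ge>1. \<forall>u\<in>(Xc \<tau> :: (real \<Rightarrow> real^'n) set). supn \<tau> (S b a u) \<le> C * supn \<tau> u" if ab: "a \<le> b" for a b
  proof -
    obtain L where L: "\<forall>u\<in>Xc \<tau>. \<forall>v\<in>Xc \<tau>.
        supn \<tau> (\<lambda>x. S b a u x - S b a v x) \<le> L * supn \<tau> (\<lambda>x. u x - v x)"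
      using lipschitz[OF ab] by blast
    show ?thesis
    proof (intro exI[of _ "max L 1"] conjI ballI)
      fix u :: "real \<Rightarrow> real^'n" assume u: "u \<in> Xc \<tau>"
      have "supn \<tau> (S b a u) \<le> L * supn \<tau> u"
        using L u zX zero[OF ab] by (metis (no_types, lifting) diff_zero ext)
      also have "\<dots> \<le> max L 1 * supn \<tau> u"
        using supn_nonneg[OF u] tau_pos by (simp add: mult_right_mono)
      finally show "supn \<tau> (S b a u) \<le> max L 1 * supn \<tau> u" .
    qed simp
  qed
  have pern: "S (b + real n * p) (a + real n * p) u = S b a u"
    if "a \<le> b" "u \<in> Xc \<tau>" for a b and u :: "real \<Rightarrow> real^'n" and n :: nat
  proof (induction n)
    case 0 then show ?case by simp
  next
    case (Suc n)
    have "S (b + real (Suc n) * p) (a + real (Suc n) * p) u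
        = S ((b + real n * p) + p) ((a + real n * p) + p) u" by (simp add: algebra_simps)
    also have "\<dots> = S (b + real n * p) (a + real n * p) u"
      by (rule periodic) (use that in auto)
    finally show ?case using Suc by simp
  qed
  have GI: "u \<in> Gset S p \<tau> r \<gamma> \<longleftrightarrow> u \<in> Xc \<tau> \<and> (\<exists>us. (\<forall>m\<le>0. us m \<in> Xc \<tau>) \<and>
      (\<forall>m::int. m \<le> -1 \<longrightarrow> S (r + p) r (us m) = us (m + 1)) \<and> us 0 = u \<and>
      Rg c (\<lambda>k. supn \<tau> (us (- int k))))" for u :: "real \<Rightarrow> real^'n" and r
  proof -
    have "limsup (\<lambda>k::nat. lnE (supn \<tau> (us (- int k))) / ereal (real k)) \<le> ereal c
       \<longleftrightarrow> Rg c (\<lambda>k. supn \<tau> (us (- int k)))" if "\<forall>m\<le>0. us m \<in> Xc \<tau>" for us :: "int \<Rightarrow> real \<Rightarrow> real^'n"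
      by (rule limsup_char) (rule supn_nonneg, use that tau_pos in auto)
    then show ?thesis unfolding Gset_def neg_semiorbit_def Phi_def c_def[symmetric]
      by (auto; metis)
  qed
  show ?thesis
  proof
    show "S t s ` Gset S p \<tau> s \<gamma> \<subseteq> Gset S p \<tau> t \<gamma>"
    proof
      fix v assume "v \<in> S t s ` Gset S p \<tau> s \<gamma>"
      then obtain u where u: "u \<in> Gset S p \<tau> s \<gamma>" and v: "v = S t s u" by blast
      then obtain us where uX: "u \<in> Xc \<tau>" and usX: "\<forall>m\<le>0. us m \<in> Xc \<tau>"
        and orb: "\<forall>m::int. m \<le> -1 \<longrightarrow> S (s + p) s (us m) = us (m + 1)"
        and u0: "us 0 = u" and R: "Rg c (\<lambda>k. supn \<tau> (us (- int k)))"
        unfolding GI by blast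
      obtain C where C: "C \<ge> 1" "\<forall>u\<in>Xc \<tau>. supn \<tau> (S t s u) \<le> C * supn \<tau> u"
        using bound[OF st] by blast
      define vs where "vs m = S t s (us m)" for m
      show "v \<in> Gset S p \<tau> t \<gamma>" unfolding GI
      proof (intro conjI exI[of _ vs] allI impI)
        show "v \<in> Xc \<tau>" using v maps st uX by blast
        show "vs m \<in> Xc \<tau>" if "m \<le> 0" for m using that usX maps st unfolding vs_def by blast
        show "vs 0 = v" using u0 v vs_def by simp
        show "S (t + p) t (vs m) = vs (m + 1)" if m: "m \<le> -1" for m
        proof -
          have w: "us m \<in> Xc \<tau>" using usX m by simp
          have "S (t + p) t (vs m) = S (t + p) s (us m)"
            unfolding vs_def by (rule semiflow) (use st p_pos w in auto)
          also have "\<dots> = S (t + p) (s + p) (S (s + p) s (us m))"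
            by (rule semiflow[symmetric]) (use st p_pos w in auto)
          also have "\<dots> = S t s (S (s + p) s (us m))"
            by (rule periodic) (use st p_pos w maps in auto)
          also have "\<dots> = vs (m + 1)" unfolding vs_def using orb m by simp
          finally show ?thesis .
        qed
        show "Rg c (\<lambda>k. supn \<tau> (vs (- int k)))"
          by (rule Rg_transfer[OF R C(1), where j = 0]) (use C(2) usX vs_def in simp)
      qed
    qed
  next
    show "Gset S p \<tau> t \<gamma> \<subseteq> S t s ` Gset S p \<tau> s \<gamma>"
    proof
      fix v assume "v \<in> Gset S p \<tau> t \<gamma>"
      then obtain vs where vX: "v \<in> Xc \<tau>" and vsX: "\<forall>m\<le>0. vs m \<in> Xc \<tau>"
        and orb: "\<forall>m::int. m \<le> -1 \<longrightarrow> S (t + p) t (vs m) = vs (m + 1)"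
        and v0: "vs 0 = v" and R: "Rg c (\<lambda>k. supn \<tau> (vs (- int k)))"
        unfolding GI by blast
      define j where "j = nat \<lceil>(t - s) / p\<rceil>"
      define s' where "s' = t - real j * p"
      have "(t - s) / p \<le> real j" unfolding j_def by linarith
      then have "t - s \<le> real j * p" using p_pos by (simp add: divide_le_eq)
      then have s's: "s' \<le> s" unfolding s'_def by simp
      have iter: "S t (t - real n * p) (vs (- int n)) = vs 0" for n :: nat
      proof (induction n)
        case 0 then show ?case using initial vsX by simp
      next
        case (Suc n)
        define w where "w = vs (- int (Suc n))"
        have w: "w \<in> Xc \<tau>" using vsX w_def by simp
        have "S t (t - real (Suc n) * p) w
            = S t (t - real n * p) (S (t - real n * p) (t - real n * p - p) w)"
          by (subst semiflow) (use p_pos w in \<open>auto simp: algebra_simps\<close>)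
        also have "S (t - real n * p) (t - real n * p - p) w = S t (t - p) w"
          using pern[of "t - real n * p - p" "t - real n * p" w n] p_pos w by simp
        also have "S t (t - p) w = S (t + p) t w"
          using pern[of "t - p" t w 1] p_pos w by simp
        also have "\<dots> = vs (- int n)" using orb w_def by (simp add: algebra_simps)
        finally show ?case using Suc w_def by simp
      qed
      define us where "us m = S s s' (vs (m - int j))" for m
      obtain C where C: "C \<ge> 1" "\<forall>u\<in>Xc \<tau>. supn \<tau> (S s s' u) \<le> C * supn \<tau> u"
        using bound[OF s's] by blast
      have us0X: "us 0 \<in> Xc \<tau>" unfolding us_def using maps s's vsX by simp
      have "S t s (us 0) = S t s' (vs (- int j))"
        unfolding us_def diff_0 by (rule semiflow) (use s's st vsX in auto)
      also have "\<dots> = v" using iter[of j] v0 s'_def by simp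
      finally have Su: "S t s (us 0) = v" .
      have "us 0 \<in> Gset S p \<tau> s \<gamma>" unfolding GI
      proof (intro conjI exI[of _ us] allI impI)
        show "us 0 \<in> Xc \<tau>" by (rule us0X)
        show "us m \<in> Xc \<tau>" if "m \<le> 0" for m using that maps s's vsX unfolding us_def by simp
        show "us 0 = us 0" ..
        show "S (s + p) s (us m) = us (m + 1)" if m: "m \<le> -1" for m
        proof -
          define w where "w = vs (m - int j)"
          have w: "w \<in> Xc \<tau>" using vsX m w_def by simp
          have "S (s + p) s (us m) = S (s + p) s' w"
            unfolding us_def w_def[symmetric] by (rule semiflow) (use s's p_pos w in auto)
          also have "\<dots> = S (s + p) (s' + p) (S (s' + p) s' w)"
            by (rule semiflow[symmetric]) (use s's p_pos w in auto)
          also have "S (s' + p) s' w = S (t + p) t w"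
          proof -
            have "s' + p + real j * p = t + p" "s' + real j * p = t" unfolding s'_def by simp_all
            moreover have "S (s' + p + real j * p) (s' + real j * p) w = S (s' + p) s' w"
              by (rule pern) (use p_pos w in auto)
            ultimately show ?thesis by metis
          qed
          also have "\<dots> = vs (m - int j + 1)" using orb m w_def by simp
          also have "S (s + p) (s' + p) (vs (m - int j + 1)) = S s s' (vs (m - int j + 1))"
            by (rule periodic) (use s's vsX m in auto)
          also have "\<dots> = us (m + 1)" unfolding us_def by (simp add: algebra_simps)
          finally show ?thesis .
        qed
        show "Rg c (\<lambda>k. supn \<tau> (us (- int k)))"
        proof (rule Rg_transfer[OF R C(1), where j = j])
          fix k
          have "vs (- int k - int j) = vs (- int (k + j))" by simp
          then show "supn \<tau> (us (- int k)) \<le> C * supn \<tau> (vs (- int (k + j)))"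
            unfolding us_def using C(2) vsX by (metis add.inverse_inverse neg_0_le_iff_le of_nat_0_le_iff)
        qed
      qed
      then show "v \<in> S t s ` Gset S p \<tau> s \<gamma>" using Su by blast
    qed
  qed
qed

end
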